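(* Let $G$ be an additive group, $K$ a field, $\widehat G$ a subgroup of finite index $n$ with cosets $G_0=\widehat G,G_1,\dots,G_{n-1}$. For any $t\in\widehat G$, any $f\in F^{per}_{t,\widehat G}$ and any $t'\in G_i$ ($1\le i\le n-1$) there exists $g\in F^{per}_{t',\widehat G}$ such that $L(f,t)\cong L(g,t')$.
   Context: $L(f,t)$ is the $K$-algebra with basis $\{e_a:a\in G\}$ and multiplication $e_ae_b=f(a,b)e_{a+b+t}$. A function $f:G\times G\to K$ is $\widehat G$-periodic if $f(a,b)$ depends only on the cosets of $\widehat G$ containing $a$ and $b$. $F^{per}_{t,\widehat G}$ is the set of $\widehat G$-periodic $f$ satisfying, for all $a,b,c\in G$, $$f(b,c)f(a,b+c+t)=f(a,b)f(a+b+t,c)-f(a,c)f(a+c+t,b)$$ (equivalently, $L(f,t)$ satisfies the right Leibniz identity $x(yz)=(xy)z-(xz)y$). *)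

theory Defs
  imports Main
begin

definition add_subgroup :: "'a::ab_group_add set \<Rightarrow> bool" where
  "add_subgroup H \<longleftrightarrow> 0 \<in> H \<and> (\<forall>a\<in>H. \<forall>b\<in>H. a + b \<in> H) \<and> (\<forall>a\<in>H. - a \<in> H)"

definition cosets :: "'a::ab_group_add set \<Rightarrow> 'a set set" where
  "cosets H = {(\<lambda>h. a + h) ` H | a. True}"

definition periodic :: "'a::ab_group_add set \<Rightarrow> ('a \<Rightarrow> 'a \<Rightarrow> 'k) \<Rightarrow> bool" where
  "periodic H f \<longleftrightarrow> (\<forall>a b a' b'. a - a' \<in> H \<longrightarrow> b - b' \<in> H \<longrightarrow> f a b = f a' b')"

definition leibniz_cond :: "('a::ab_group_add \<Rightarrow> 'a \<Rightarrow> 'k::field) \<Rightarrow> 'a \<Rightarrow> bool" where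
  "leibniz_cond f t \<longleftrightarrow> (\<forall>a b c.
     f b c * f a (b + c + t) = f a b * f (a + b + t) c - f a c * f (a + c + t) b)"

definition F_per :: "'a::ab_group_add \<Rightarrow> 'a set \<Rightarrow> ('a \<Rightarrow> 'a \<Rightarrow> 'k::field) set" where
  "F_per t H = {f. periodic H f \<and> leibniz_cond f t}"

text \<open>Elements of L(f,t): finitely supported functions G \<Rightarrow> K (coefficients w.r.t. the basis e_a).\<close>
definition fsupp :: "('a \<Rightarrow> 'k::zero) \<Rightarrow> bool" where
  "fsupp x \<longleftrightarrow> finite {a. x a \<noteq> 0}"

text \<open>Multiplication of L(f,t): bilinear extension of e_a e_b = f(a,b) e_(a+b+t).\<close>
definition Lmult :: "('a::ab_group_add \<Rightarrow> 'a \<Rightarrow> 'k::field) \<Rightarrow> 'a \<Rightarrow> ('a \<Rightarrow> 'k) \<Rightarrow> ('a \<Rightarrow> 'k) \<Rightarrow> ('a \<Rightarrow> 'k)" where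
  "Lmult f t x y = (\<lambda>c. \<Sum>p \<in> {a. x a \<noteq> 0} \<times> {b. y b \<noteq> 0}.
      if fst p + snd p + t = c then x (fst p) * y (snd p) * f (fst p) (snd p) else 0)"

definition L_iso :: "('a::ab_group_add \<Rightarrow> 'a \<Rightarrow> 'k::field) \<Rightarrow> 'a \<Rightarrow> ('a \<Rightarrow> 'a \<Rightarrow> 'k) \<Rightarrow> 'a \<Rightarrow> bool" where
  "L_iso f t g t' \<longleftrightarrow> (\<exists>\<phi> :: ('a \<Rightarrow> 'k) \<Rightarrow> ('a \<Rightarrow> 'k).
      bij_betw \<phi> {x. fsupp x} {x. fsupp x}
    \<and> (\<forall>x y. fsupp x \<longrightarrow> fsupp y \<longrightarrow> \<phi> (\<lambda>a. x a + y a) = (\<lambda>a. \<phi> x a + \<phi> y a))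
    \<and> (\<forall>k x. fsupp x \<longrightarrow> \<phi> (\<lambda>a. k * x a) = (\<lambda>a. k * \<phi> x a))
    \<and> (\<forall>x y. fsupp x \<longrightarrow> fsupp y \<longrightarrow> \<phi> (Lmult f t x y) = Lmult g t' (\<phi> x) (\<phi> y)))"

end

theory Submission
  imports Defs
begin

lemma fsupp_shift:
  fixes x :: "'a::ab_group_add \<Rightarrow> 'k::field"
  assumes "fsupp x" shows "fsupp (\<lambda>a. x (a - s))"
proof -
  have "{a. x (a - s) \<noteq> 0} = (\<lambda>a. a + s) ` {a. x a \<noteq> 0}"
    by (auto simp: image_iff intro!: exI[of _ "_ - s"])
  thus ?thesis using assms unfolding fsupp_def by simp
qed

lemma fsupp_shift':
  fixes x :: "'a::ab_group_add \<Rightarrow> 'k::field"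
  assumes "fsupp x" shows "fsupp (\<lambda>a. x (a + s))"
  using fsupp_shift[OF assms, of "-s"] by simp

theorem proposition4p3:
  fixes H :: "'a::ab_group_add set" and t t' :: 'a and f :: "'a \<Rightarrow> 'a \<Rightarrow> 'k::field"
  assumes "add_subgroup H"
    and "finite (cosets H)"
    and "t \<in> H"
    and "f \<in> F_per t H"
    and "t' \<notin> H"
  shows "\<exists>g \<in> F_per t' H. L_iso f t g t'"
proof -
  define s where "s = t - t'"
  define g where "g = (\<lambda>a b. f (a - s) (b - s))"
  have per: "periodic H f" and lc: "leibniz_cond f t" using assms(4) by (auto simp: F_per_def)
  have "periodic H g"
    using per unfolding periodic_def g_def
    by (metis diff_diff_eq2 diff_add_cancel add_diff_cancel_right')
  moreover have "leibniz_cond g t'"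
    unfolding leibniz_cond_def g_def
  proof (intro allI)
    fix a b c :: 'a
    have e1: "b + c + t' - s = (b - s) + (c - s) + t" 
      and e2: "a + b + t' - s = (a - s) + (b - s) + t"
      and e3: "a + c + t' - s = (a - s) + (c - s) + t"
      by (simp_all add: s_def algebra_simps)
    show "f (b - s) (c - s) * f (a - s) (b + c + t' - s) =
          f (a - s) (b - s) * f (a + b + t' - s) (c - s) - f (a - s) (c - s) * f (a + c + t' - s) (b - s)"
      unfolding e1 e2 e3 using lc unfolding leibniz_cond_def by blast
  qed
  ultimately have gF: "g \<in> F_per t' H" by (simp add: F_per_def)
  define \<phi> :: "('a \<Rightarrow> 'k) \<Rightarrow> ('a \<Rightarrow> 'k)" where "\<phi> = (\<lambda>x a. x (a - s))"
  have bij: "bij_betw \<phi> {x. fsupp x} {x. fsupp x}"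
  proof (rule bij_betw_byWitness[where f' = "\<lambda>(x::'a \<Rightarrow> 'k) a. x (a + s)"])
    show "\<forall>a\<in>{x. fsupp x}. (\<lambda>a'. \<phi> a (a' + s)) = a" by (simp add: \<phi>_def)
    show "\<forall>a'\<in>{x. fsupp x}. \<phi> (\<lambda>a. a' (a + s)) = a'" by (simp add: \<phi>_def)
    show "\<phi> ` {x. fsupp x} \<subseteq> {x. fsupp x}" by (auto simp: \<phi>_def fsupp_shift)
    show "(\<lambda>(x::'a \<Rightarrow> 'k) a. x (a + s)) ` {x. fsupp x} \<subseteq> {x. fsupp x}"
      by (auto simp: fsupp_shift')
  qed
  have mult: "\<phi> (Lmult f t x y) = Lmult g t' (\<phi> x) (\<phi> y)" for x y
  proof
    fix c
    have ts: "t - s = t'" by (simp add: s_def)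
    have cond: "(u + s + (v + s) + t' = c) = (u + v + t = c - s)" for u v
      by (auto simp: s_def algebra_simps)
    have "Lmult g t' (\<phi> x) (\<phi> y) c =
      (\<Sum>p \<in> {a. x (a - s) \<noteq> 0} \<times> {b. y (b - s) \<noteq> 0}.
        if fst p + snd p + t' = c then x (fst p - s) * y (snd p - s) * f (fst p - s) (snd p - s) else 0)"
      by (simp add: Lmult_def \<phi>_def g_def)
    also have "\<dots> = (\<Sum>p \<in> {a. x a \<noteq> 0} \<times> {b. y b \<noteq> 0}.
        if fst p + snd p + t = c - s then x (fst p) * y (snd p) * f (fst p) (snd p) else 0)"
    proof (rule sum.reindex_bij_witness[where i = "\<lambda>p. (fst p + s, snd p + s)" and j = "\<lambda>p. (fst p - s, snd p - s)"])
    qed (auto simp: cond ts)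
    also have "\<dots> = \<phi> (Lmult f t x y) c" by (simp add: Lmult_def \<phi>_def)
    finally show "\<phi> (Lmult f t x y) c = Lmult g t' (\<phi> x) (\<phi> y) c" by simp
  qed
  have "L_iso f t g t'"
    unfolding L_iso_def
    by (rule exI[of _ \<phi>]) (use bij mult in \<open>auto simp: \<phi>_def\<close>)
  thus ?thesis using gF by blast
qed

end
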